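(* Let $\mathcal{X}$ be countable and $\mathcal{H}\subseteq\{0,1\}^{\mathcal{X}}$ a class with $\mathtt{RepDim}(\mathcal{H})<\infty$. Then $\mathtt{CD}^\star(\mathcal{H})<\infty$.
   Context: A dataset of size $m$ is $S=((x_1,y_1),\dots,(x_m,y_m))\in(\mathcal{X}\times\{0,1\})^m$; it is $\mathcal{H}$-realizable if some $h\in\mathcal{H}$ satisfies $h(x_i)=y_i$ for all $i$. $G_m(\mathcal{H})$ is the graph on realizable datasets of size $m$ with $S,S'$ adjacent iff there is $x$ with $(x,0)$ appearing in $S$ and $(x,1)$ appearing in $S'$. A fractional clique of a graph $G=(V,E)$ is $\delta:V\to[0,\infty)$ with $\sum_{v\in I}\delta(v)\le1$ for every independent set $I$; $\omega^\star_m$ is the supremum of $\sum_v\delta(v)$ over fractional cliques of $G_m(\mathcal{H})$; $\mathtt{CD}^\star(\mathcal{H})=\sup\{m:\omega^\star_m=2^m\}$. For a distribution $\mathcal{D}$ on $\mathcal{X}\times\{0,1\}$, $L_{\mathcal{D}}(h)=\Pr_{(x,y)\sim\mathcal{D}}[h(x)\neq y]$, and $\mathcal{D}$ is realizable if $\inf_{h\in\mathcal{H}}L_{\mathcal{D}}(h)=0$. The representation dimension $\mathtt{RepDim}(\mathcal{H})$ is $\ln k$, where $k$ is the minimal integer for which there is a probability distribution $\mathcal{P}$ over hypothesis classes $\mathcal{C}\subseteq\{0,1\}^{\mathcal{X}}$ of size $k$ such that for every realizable $\mathcal{D}$, $\Pr_{\mathcal{C}\sim\mathcal{P}}[\exists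 h\in\mathcal{C}: L_{\mathcal{D}}(h)\le 1/4]\ge 3/4$ (and $\infty$ if no such $k$ exists). *)

theory Defs
  imports "HOL-Probability.Probability"
begin

type_synonym 'a dataset = "('a \<times> bool) list"

definition realizable_set :: "('a \<Rightarrow> bool) set \<Rightarrow> 'a dataset \<Rightarrow> bool" where
  "realizable_set H S \<longleftrightarrow> (\<exists>h\<in>H. \<forall>(x,y)\<in>set S. h x = y)"

definition G_vertices :: "('a \<Rightarrow> bool) set \<Rightarrow> nat \<Rightarrow> 'a dataset set" where
  "G_vertices H m = {S. length S = m \<and> realizable_set H S}"

definition G_adj :: "'a dataset \<Rightarrow> 'a dataset \<Rightarrow> bool" where
  "G_adj S S' \<longleftrightarrow> (\<exists>x. ((x,False) \<in> set S \<and> (x,True) \<in> set S') \<or>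
                        ((x,True) \<in> set S \<and> (x,False) \<in> set S'))"

definition G_independent :: "('a \<Rightarrow> bool) set \<Rightarrow> nat \<Rightarrow> 'a dataset set \<Rightarrow> bool" where
  "G_independent H m I \<longleftrightarrow> I \<subseteq> G_vertices H m \<and> (\<forall>S\<in>I. \<forall>S'\<in>I. \<not> G_adj S S')"

definition nn_sum :: "('b \<Rightarrow> real) \<Rightarrow> 'b set \<Rightarrow> ereal" where
  "nn_sum \<delta> A = (SUP F\<in>{F. F \<subseteq> A \<and> finite F}. ereal (sum \<delta> F))"

definition frac_clique :: "('a \<Rightarrow> bool) set \<Rightarrow> nat \<Rightarrow> ('a dataset \<Rightarrow> real) \<Rightarrow> bool" where
  "frac_clique H m \<delta> \<longleftrightarrow> (\<forall>v\<in>G_vertices H m. \<delta> v \<ge> 0) \<and>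
     (\<forall>I. G_independent H m I \<longrightarrow> nn_sum \<delta> I \<le> 1)"

definition omega_star :: "('a \<Rightarrow> bool) set \<Rightarrow> nat \<Rightarrow> ereal" where
  "omega_star H m = (SUP \<delta>\<in>{\<delta>. frac_clique H m \<delta>}. nn_sum \<delta> (G_vertices H m))"

definition CD_star_finite :: "('a \<Rightarrow> bool) set \<Rightarrow> bool" where
  "CD_star_finite H \<longleftrightarrow> (\<exists>N. \<forall>m. omega_star H m = ereal (2 ^ m) \<longrightarrow> m \<le> N)"

text \<open>Distributions on the countable (discrete) space X \<times> {0,1} are pmfs.\<close>
definition loss :: "('a \<times> bool) pmf \<Rightarrow> ('a \<Rightarrow> bool) \<Rightarrow> real" where
  "loss D h = measure_pmf.prob D {(x,y). h x \<noteq> y}"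

definition realizable_dist :: "('a \<Rightarrow> bool) set \<Rightarrow> ('a \<times> bool) pmf \<Rightarrow> bool" where
  "realizable_dist H D \<longleftrightarrow> (\<forall>\<epsilon>>0. \<exists>h\<in>H. loss D h < \<epsilon>)"

definition rep_ok :: "('a \<Rightarrow> bool) set \<Rightarrow> nat \<Rightarrow> bool" where
  "rep_ok H k \<longleftrightarrow> (\<exists>P :: ('a \<Rightarrow> bool) set measure. prob_space P \<and>
      (\<forall>C\<in>space P. finite C \<and> card C = k) \<and>
      (\<forall>D. realizable_dist H D \<longrightarrow>
          {C\<in>space P. \<exists>h\<in>C. loss D h \<le> 1/4} \<in> sets P \<and>
          measure P {C\<in>space P. \<exists>h\<in>C. loss D h \<le> 1/4} \<ge> 3/4))"

definition RepDim :: "('a \<Rightarrow> bool) set \<Rightarrow> ereal" where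
  "RepDim H = (if \<exists>k. rep_ok H k then ereal (ln (real (LEAST k. rep_ok H k))) else \<infinity>)"

end

theory Submission imports Defs begin

definition cons_set :: "'a dataset \<Rightarrow> ('a \<Rightarrow> bool) set" where
  "cons_set S = {g. \<forall>(x,y)\<in>set S. g x = y}"

lemma nn_sum_ge_sum: "finite I \<Longrightarrow> ereal (sum \<delta> I) \<le> nn_sum \<delta> I"
  unfolding nn_sum_def by (rule SUP_upper) auto

lemma clique_pmf_bound:
  fixes \<mu> :: "('a \<Rightarrow> bool) pmf"
  assumes fc: "frac_clique H m \<delta>" and F: "finite F" "F \<subseteq> G_vertices H m"
  shows "(\<Sum>S\<in>F. \<delta> S * measure_pmf.prob \<mu> (cons_set S)) \<le> 1"
proof -
  have pt: "(\<Sum>S\<in>F. \<delta> S * indicator (cons_set S) g) \<le> 1" for g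
  proof -
    let ?I = "{S\<in>F. g \<in> cons_set S}"
    have eq: "(\<Sum>S\<in>F. \<delta> S * indicator (cons_set S) g) = sum \<delta> ?I"
      by (subst sum.inter_filter[OF F(1)]) (rule sum.cong, rule refl, simp add: indicator_def)
    have "G_independent H m ?I"
    proof -
      have "\<not> G_adj S S'" if "g \<in> cons_set S" "g \<in> cons_set S'" for S S'
      proof
        assume "G_adj S S'"
        then obtain x where "((x,False)\<in>set S \<and> (x,True)\<in>set S') \<or> ((x,True)\<in>set S \<and> (x,False)\<in>set S')"
          by (auto simp: G_adj_def)
        then show False using that unfolding cons_set_def by fastforce
      qed
      then show ?thesis unfolding G_independent_def using F(2) by blast
    qed
    then have "nn_sum \<delta> ?I \<le> 1" using fc unfolding frac_clique_def by blast
    moreover have "ereal (sum \<delta> ?I) \<le> nn_sum \<delta> ?I" using F(1) by (intro nn_sum_ge_sum) auto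
    ultimately have "ereal (sum \<delta> ?I) \<le> 1" by (meson order_trans)
    then show ?thesis using eq by simp
  qed
  have ii: "integrable (measure_pmf \<mu>) (\<lambda>g. \<delta> S * indicator (cons_set S) g)" for S
    by (intro integrable_mult_right integrable_real_indicator) (simp_all add: measure_pmf.emeasure_finite less_top[symmetric])
  have "(\<Sum>S\<in>F. \<delta> S * measure_pmf.prob \<mu> (cons_set S)) =
        measure_pmf.expectation \<mu> (\<lambda>g. \<Sum>S\<in>F. \<delta> S * indicator (cons_set S) g)"
    by (subst Bochner_Integration.integral_sum[OF ii]) simp
  also have "\<dots> \<le> 1"
    by (intro measure_pmf.integral_le_const AE_pmfI pt Bochner_Integration.integrable_sum ii)
  finally show ?thesis .
qed
definition flipw :: "('a \<Rightarrow> bool) \<Rightarrow> ('a \<times> bool) \<Rightarrow> real" where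
  "flipw h p = (if h (fst p) = snd p then 3/4 else 1/4)"

definition mu_h :: "('a \<Rightarrow> bool) \<Rightarrow> 'a set \<Rightarrow> ('a \<Rightarrow> bool) pmf" where
  "mu_h h U = Pi_pmf U False (\<lambda>x. bernoulli_pmf (if h x then 3/4 else 1/4))"

lemma realizable_functional:
  assumes "realizable_set H S" "(x,y) \<in> set S" "(x,y') \<in> set S"
  shows "y = y'"
proof -
  obtain h where h: "\<forall>p\<in>set S. h (fst p) = snd p" using assms(1) unfolding realizable_set_def by (auto simp: case_prod_beta)
  have "h x = y" using h assms(2) by fastforce
  moreover have "h x = y'" using h assms(3) by fastforce
  ultimately show ?thesis by simp
qed

lemma mu_h_prob:
  assumes R: "realizable_set H S" and U: "finite U" "fst ` set S \<subseteq> U"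
  shows "measure_pmf.prob (mu_h h U) (cons_set S) = (\<Prod>p\<in>set S. flipw h p)"
proof -
  let ?A = "fst ` set S"
  define B where "B x = {y. (x,y) \<in> set S}" for x
  have eq: "cons_set S = Pi ?A B"
  proof
    show "cons_set S \<subseteq> Pi ?A B"
      unfolding cons_set_def B_def Pi_def by force
    show "Pi ?A B \<subseteq> cons_set S"
    proof
      fix g assume g: "g \<in> Pi ?A B"
      have "g x = y" if "(x,y) \<in> set S" for x y
      proof -
        have "x \<in> ?A" using that by force
        then have "(x, g x) \<in> set S" using g unfolding B_def by auto
        then show ?thesis using realizable_functional[OF R that] by blast
      qed
      then show "g \<in> cons_set S" unfolding cons_set_def by auto
    qed
  qed
  define B' where "B' x = (if x \<in> ?A then B x else UNIV)" for x
  have eq2: "Pi ?A B = Pi U B'" using U(2) unfolding B'_def Pi_def by auto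
  have "measure_pmf.prob (mu_h h U) (cons_set S) =
     (\<Prod>x\<in>U. measure_pmf.prob (bernoulli_pmf (if h x then 3/4 else 1/4)) (B' x))"
    unfolding eq eq2 mu_h_def by (rule measure_Pi_pmf_Pi) (rule U)
  also have "\<dots> = (\<Prod>x\<in>?A. measure_pmf.prob (bernoulli_pmf (if h x then 3/4 else 1/4)) (B' x))"
    by (rule prod.mono_neutral_right[OF U(1) U(2)]) (simp add: B'_def)
  also have "\<dots> = (\<Prod>x\<in>?A. measure_pmf.prob (bernoulli_pmf (if h x then 3/4 else 1/4)) (B x))"
    by (rule prod.cong) (auto simp: B'_def)
  also have "\<dots> = (\<Prod>p\<in>set S. measure_pmf.prob (bernoulli_pmf (if h (fst p) then 3/4 else 1/4)) (B (fst p)))"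
  proof (rule prod.reindex[unfolded comp_def])
    show "inj_on fst (set S)"
    proof (rule inj_onI)
      fix p q assume pq: "p \<in> set S" "q \<in> set S" "fst p = fst q"
      then have "(fst p, snd p) \<in> set S" "(fst p, snd q) \<in> set S" by (metis prod.collapse)+
      then have "snd p = snd q" by (rule realizable_functional[OF R])
      then show "p = q" using pq(3) by (simp add: prod_eq_iff)
    qed
  qed
  also have "\<dots> = (\<Prod>p\<in>set S. flipw h p)"
  proof (rule prod.cong[OF refl])
    fix p assume p: "p \<in> set S"
    have "(fst p, snd p) \<in> set S" using p by simp
    then have "y = snd p" if "(fst p, y) \<in> set S" for y
      using realizable_functional[OF R that] by blast
    then have "B (fst p) = {snd p}" unfolding B_def using p by auto
    then show "measure_pmf.prob (bernoulli_pmf (if h (fst p) then 3/4 else 1/4)) (B (fst p)) = flipw h p"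
      by (simp add: measure_pmf_single flipw_def)
  qed
  finally show ?thesis .
qed

lemma num_ineq:
  fixes a e m j :: nat
  assumes "a + e \<le> m" "e \<le> j" "4 * j \<le> m"
  shows "(27/16::real)^j / 2^m \<le> (3/4)^a * (1/4)^e"
proof -
  have "(3/4::real)^a * (1/4)^e = (3/4)^(a+e) * (1/3)^e"
    by (simp add: power_add power_divide)
  also have "\<dots> \<ge> (3/4)^m * (1/3)^j"
    by (intro mult_mono power_decreasing assms) auto
  finally have 1: "(3/4)^m * (1/3::real)^j \<le> (3/4)^a * (1/4)^e" .
  have "(3/2::real)^(4*j) \<le> (3/2)^m" by (intro power_increasing assms) auto
  moreover have "(3/2::real)^(4*j) = (27/16)^j * 3^j"
  proof -
    have e: "(3/2::real)^4 = 27/16*3" by (simp add: power_divide)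
    have "(3/2::real)^(4*j) = ((3/2)^4)^j" by (simp only: power_mult)
    also have "\<dots> = (27/16*3)^j" by (simp only: e)
    also have "\<dots> = (27/16)^j*3^j" by (rule power_mult_distrib)
    finally show ?thesis .
  qed
  ultimately have "(27/16::real)^j * 3^j \<le> (3/2)^m" by simp
  then have "(27/16::real)^j \<le> (3/2)^m / 3^j" by (simp add: field_simps)
  also have "(3/2::real)^m / 3^j = ((3/4)^m * (1/3)^j) * 2^m"
    by (simp add: power_divide field_simps power_mult_distrib[symmetric])
  finally have "(27/16::real)^j / 2^m \<le> (3/4)^m * (1/3)^j" by (simp add: field_simps)
  with 1 show ?thesis by linarith
qed

lemma flip_lower:
  assumes "4 * card {p\<in>set S. h (fst p) \<noteq> snd p} \<le> length S"
  shows "(27/16::real)^(length S div 4) / 2^(length S) \<le> (\<Prod>p\<in>set S. flipw h p)"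
proof -
  let ?A = "{p\<in>set S. h (fst p) = snd p}" and ?E = "{p\<in>set S. h (fst p) \<noteq> snd p}"
  have "(\<Prod>p\<in>set S. flipw h p) = (\<Prod>p\<in>?A. 3/4) * (\<Prod>p\<in>?E. 1/4)"
    unfolding flipw_def by (subst prod.If_cases) (simp_all add: Int_def set_diff_eq)
  also have "\<dots> = (3/4)^card ?A * (1/4)^card ?E" by simp
  finally have eq: "(\<Prod>p\<in>set S. flipw h p) = (3/4)^card ?A * (1/4)^card ?E" .
  have "card ?A + card ?E = card (set S)"
    by (subst card_Un_disjoint[symmetric]) (auto intro: arg_cong[where f=card])
  also have "\<dots> \<le> length S" by (rule card_length)
  finally have 1: "card ?A + card ?E \<le> length S" .
  have 2: "card ?E \<le> length S div 4" using assms by linarith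
  show ?thesis unfolding eq by (rule num_ineq[OF 1 2]) linarith
qed

definition D_of :: "'a dataset \<Rightarrow> ('a \<times> bool) pmf" where
  "D_of S = map_pmf (\<lambda>i. S ! i) (pmf_of_set {..<length S})"

lemma loss_D_of:
  assumes "S \<noteq> []"
  shows "loss (D_of S) h = card {i\<in>{..<length S}. h (fst (S!i)) \<noteq> snd (S!i)} / length S"
proof -
  have "loss (D_of S) h = measure_pmf.prob (pmf_of_set {..<length S}) ((\<lambda>i. S ! i) -` {(x,y). h x \<noteq> y})"
    unfolding loss_def D_of_def by simp
  also have "\<dots> = card ({..<length S} \<inter> ((\<lambda>i. S ! i) -` {(x,y). h x \<noteq> y})) / card {..<length S}"
    using assms by (subst measure_pmf_of_set) auto
  also have "{..<length S} \<inter> ((\<lambda>i. S ! i) -` {(x,y). h x \<noteq> y}) = {i\<in>{..<length S}. h (fst (S!i)) \<noteq> snd (S!i)}"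
    by (auto simp: case_prod_beta)
  finally show ?thesis by simp
qed

lemma loss_small:
  assumes "S \<noteq> []" "loss (D_of S) h \<le> 1/4"
  shows "4 * card {p\<in>set S. h (fst p) \<noteq> snd p} \<le> length S"
proof -
  let ?I = "{i\<in>{..<length S}. h (fst (S!i)) \<noteq> snd (S!i)}"
  have "{p\<in>set S. h (fst p) \<noteq> snd p} \<subseteq> (\<lambda>i. S ! i) ` ?I"
  proof
    fix p assume p: "p \<in> {p\<in>set S. h (fst p) \<noteq> snd p}"
    then obtain i where "i < length S" "S ! i = p" by (auto simp: in_set_conv_nth)
    then show "p \<in> (\<lambda>i. S ! i) ` ?I" using p by force
  qed
  then have "card {p\<in>set S. h (fst p) \<noteq> snd p} \<le> card ((\<lambda>i. S ! i) ` ?I)"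
    by (intro card_mono) auto
  also have "\<dots> \<le> card ?I" by (rule card_image_le) auto
  finally have c: "card {p\<in>set S. h (fst p) \<noteq> snd p} \<le> card ?I" .
  have "real (card ?I) / length S \<le> 1/4" using assms loss_D_of[OF assms(1), of h] by simp
  then have "4 * real (card ?I) \<le> length S" using assms(1) by (simp add: field_simps)
  then have "4 * card ?I \<le> length S" by linarith
  with c show ?thesis by linarith
qed

lemma realizable_D_of:
  assumes "S \<noteq> []" "realizable_set H S"
  shows "realizable_dist H (D_of S)"
proof -
  obtain h where h: "h \<in> H" "\<forall>p\<in>set S. h (fst p) = snd p"
    using assms(2) unfolding realizable_set_def by (auto simp: case_prod_beta)
  have "{i\<in>{..<length S}. h (fst (S!i)) \<noteq> snd (S!i)} = {}" using h(2) by auto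
  then have "loss (D_of S) h = 0" using loss_D_of[OF assms(1)] by simp
  then show ?thesis unfolding realizable_dist_def using h(1) by (intro allI impI bexI[of _ h]) auto
qed

lemma flipw_pos: "flipw h p > 0" unfolding flipw_def by simp

lemma key_bound:
  fixes P :: "('a \<Rightarrow> bool) set measure"
  assumes P: "prob_space P" and Pk: "\<forall>C\<in>space P. finite C \<and> card C = k"
    and PD: "\<forall>D. realizable_dist H D \<longrightarrow>
          {C\<in>space P. \<exists>h\<in>C. loss D h \<le> 1/4} \<in> sets P \<and>
          measure P {C\<in>space P. \<exists>h\<in>C. loss D h \<le> 1/4} \<ge> 3/4"
    and m: "m \<ge> 1" and Bk: "2 * real k \<le> (27/16)^(m div 4)"
    and fc: "frac_clique H m \<delta>" and F: "finite F" "F \<subseteq> G_vertices H m"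
  shows "sum \<delta> F \<le> (2/3) * 2^m"
proof -
  interpret P: prob_space P by (rule P)
  define B :: real where "B = (27/16)^(m div 4)"
  define c where "c = B / 2^m"
  have Bpos: "B > 0" unfolding B_def by simp
  have cpos: "c > 0" unfolding c_def using Bpos by simp
  define E where "E S = {C\<in>space P. \<exists>h\<in>C. loss (D_of S) h \<le> 1/4}" for S
  have SF: "length S = m" "realizable_set H S" "S \<noteq> []" if "S \<in> F" for S
    using that F(2) m unfolding G_vertices_def by auto
  have dpos: "\<delta> S \<ge> 0" if "S \<in> F" for S
    using fc F(2) that unfolding frac_clique_def by auto
  have ES: "E S \<in> sets P" "measure P (E S) \<ge> 3/4" if "S \<in> F" for S
    using PD realizable_D_of[OF SF(3,2)[OF that]] unfolding E_def by auto
  define U where "U = (\<Union>S\<in>F. fst ` set S)"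
  have U: "finite U" "fst ` set S \<subseteq> U" if "S \<in> F" for S
    using F(1) that unfolding U_def by auto
  define pi :: "('a \<Rightarrow> bool) \<Rightarrow> 'a dataset \<Rightarrow> real" where "pi h S = (\<Prod>p\<in>set S. flipw h p)" for h S
  have pipos: "pi h S \<ge> 0" for h S unfolding pi_def by (intro prod_nonneg) (simp add: less_imp_le flipw_pos)
  have perh: "(\<Sum>S\<in>F. \<delta> S * pi h S) \<le> 1" for h
  proof -
    have "(\<Sum>S\<in>F. \<delta> S * pi h S) = (\<Sum>S\<in>F. \<delta> S * measure_pmf.prob (mu_h h U) (cons_set S))"
    proof (rule sum.cong[OF refl])
      fix S assume S: "S \<in> F"
      show "\<delta> S * pi h S = \<delta> S * measure_pmf.prob (mu_h h U) (cons_set S)"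
        using mu_h_prob[OF SF(2)[OF S] U(1)[OF S] U(2)[OF S]] by (simp add: pi_def)
    qed
    also have "\<dots> \<le> 1" by (rule clique_pmf_bound[OF fc F])
    finally show ?thesis .
  qed
  define f where "f C = (\<Sum>S\<in>F. \<delta> S * indicator (E S) C)" for C
  have fbound: "c * f C \<le> real k" if C: "C \<in> space P" for C
  proof -
    have lo: "c * (\<delta> S * indicator (E S) C) \<le> \<delta> S * (\<Sum>h\<in>C. pi h S)" if S: "S \<in> F" for S
    proof (cases "C \<in> E S")
      case True
      then obtain h where h: "h \<in> C" "loss (D_of S) h \<le> 1/4" unfolding E_def by auto
      have "c \<le> pi h S" unfolding c_def B_def pi_def
        using flip_lower[OF loss_small[OF SF(3)[OF S] h(2)]] SF(1)[OF S] by simp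
      also have "\<dots> \<le> (\<Sum>h\<in>C. pi h S)"
        by (rule member_le_sum[OF h(1)]) (use pipos Pk C in auto)
      finally show ?thesis using True dpos[OF S] by (simp add: mult.commute[of c] mult_left_mono)
    next
      case False
      then show ?thesis using dpos[OF S] pipos by (simp add: sum_nonneg)
    qed
    have "c * f C = (\<Sum>S\<in>F. c * (\<delta> S * indicator (E S) C))"
      unfolding f_def by (simp add: sum_distrib_left)
    also have "\<dots> \<le> (\<Sum>S\<in>F. \<delta> S * (\<Sum>h\<in>C. pi h S))" by (rule sum_mono) (rule lo)
    also have "\<dots> = (\<Sum>h\<in>C. \<Sum>S\<in>F. \<delta> S * pi h S)"
      by (simp add: sum_distrib_left sum.swap[of _ C F])
    also have "\<dots> \<le> (\<Sum>h\<in>C. 1)" by (rule sum_mono) (rule perh)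
    also have "\<dots> = real k" using Pk C by simp
    finally show ?thesis .
  qed
  have ii: "integrable P (\<lambda>C. \<delta> S * indicator (E S) C)" if "S \<in> F" for S
    by (intro integrable_mult_right integrable_real_indicator ES(1)[OF that]) (simp_all add: P.emeasure_finite less_top[symmetric])
  have intf: "integral\<^sup>L P f = (\<Sum>S\<in>F. \<delta> S * measure P (E S))"
  proof -
    have "integral\<^sup>L P f = (\<Sum>S\<in>F. integral\<^sup>L P (\<lambda>C. \<delta> S * indicator (E S) C))"
      unfolding f_def by (rule Bochner_Integration.integral_sum) (rule ii)
    also have "\<dots> = (\<Sum>S\<in>F. \<delta> S * measure P (E S))"
    proof (rule sum.cong[OF refl])
      fix S assume "S \<in> F"
      have "E S \<inter> space P = E S" unfolding E_def by auto
      then show "integral\<^sup>L P (\<lambda>C. \<delta> S * indicator (E S) C) = \<delta> S * measure P (E S)"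
        by simp
    qed
    finally show ?thesis .
  qed
  have "(3/4) * sum \<delta> F \<le> (\<Sum>S\<in>F. \<delta> S * measure P (E S))"
    unfolding sum_distrib_left
  proof (rule sum_mono)
    fix S assume S: "S \<in> F"
    show "3/4 * \<delta> S \<le> \<delta> S * measure P (E S)"
      using mult_left_mono[OF ES(2)[OF S] dpos[OF S]] by (simp add: mult.commute)
  qed
  also have "\<dots> = integral\<^sup>L P f" by (rule intf[symmetric])
  finally have 1: "(3/4) * sum \<delta> F \<le> integral\<^sup>L P f" .
  have "integral\<^sup>L P (\<lambda>C. c * f C) \<le> real k"
    by (intro P.integral_le_const AE_I2 fbound integrable_mult_right)
       (auto simp: f_def intro!: Bochner_Integration.integrable_sum ii)
  then have "c * integral\<^sup>L P f \<le> real k" by simp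
  with 1 cpos have "c * ((3/4) * sum \<delta> F) \<le> real k"
    by (meson mult_left_mono less_imp_le order_trans)
  then have "(3/4) * sum \<delta> F * B \<le> real k * 2^m" unfolding c_def by (simp add: field_simps)
  also have "\<dots> \<le> (B/2) * 2^m" using Bk unfolding B_def by simp
  finally have "(3/4) * sum \<delta> F * B \<le> ((2/3) * 2^m) * (3/4) * B" by (simp add: field_simps)
  then show ?thesis using Bpos by simp
qed

theorem mainTheorem16:
  fixes H :: "('a::countable \<Rightarrow> bool) set"
  assumes "RepDim H < \<infinity>"
  shows "CD_star_finite H"
proof -
  have "\<exists>k. rep_ok H k" using assms unfolding RepDim_def by (auto split: if_splits)
  then obtain k where "rep_ok H k" by blast
  then obtain P :: "('a \<Rightarrow> bool) set measure" where P: "prob_space P"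
    and Pk: "\<forall>C\<in>space P. finite C \<and> card C = k"
    and PD: "\<forall>D. realizable_dist H D \<longrightarrow>
          {C\<in>space P. \<exists>h\<in>C. loss D h \<le> 1/4} \<in> sets P \<and>
          measure P {C\<in>space P. \<exists>h\<in>C. loss D h \<le> 1/4} \<ge> 3/4"
    unfolding rep_ok_def by blast
  obtain j0 where j0: "2 * real k < (27/16::real)^j0" using real_arch_pow[of "27/16" "2 * real k"] by auto
  have bound: "omega_star H m \<le> ereal ((2/3) * 2^m)" if m: "m > 4 * j0 + 3" for m
  proof -
    have m1: "m \<ge> 1" using m by simp
    have "j0 \<le> m div 4" using m by linarith
    then have "(27/16::real)^j0 \<le> (27/16)^(m div 4)" by (intro power_increasing) auto
    then have Bk: "2 * real k \<le> (27/16)^(m div 4)" using j0 by linarith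
    show ?thesis unfolding omega_star_def
    proof (rule SUP_least)
      fix \<delta> assume "\<delta> \<in> {\<delta>. frac_clique H m \<delta>}"
      then have fc: "frac_clique H m \<delta>" by simp
      show "nn_sum \<delta> (G_vertices H m) \<le> ereal ((2/3) * 2^m)" unfolding nn_sum_def
      proof (rule SUP_least)
        fix F assume "F \<in> {F. F \<subseteq> G_vertices H m \<and> finite F}"
        then have F: "finite F" "F \<subseteq> G_vertices H m" by auto
        show "ereal (sum \<delta> F) \<le> ereal ((2/3) * 2^m)"
          using key_bound[OF P Pk PD m1 Bk fc F] by simp
      qed
    qed
  qed
  show ?thesis unfolding CD_star_finite_def
  proof (intro exI allI impI)
    fix m assume eq: "omega_star H m = ereal (2 ^ m)"
    show "m \<le> 4 * j0 + 3"
    proof (rule ccontr)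
      assume "\<not> m \<le> 4 * j0 + 3"
      then have "omega_star H m \<le> ereal ((2/3) * 2^m)" by (intro bound) simp
      then have "(2::real)^m \<le> (2/3) * 2^m" using eq by simp
      then show False by simp
    qed
  qed
qed

end
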